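(* Let $0<\epsilon<1$ be fixed. Suppose that Assumption 2 holds and that at least one of Assumption 1.1 and Assumption 1.2 holds. Suppose moreover that for every $C\subseteq V$ with $|C|=r$, \[ \max_{\emptyset\ne D\subseteq C}\frac{\mathbb{E}_0[e(D)]\,h(\rho_C-1)}{|D|\log(n/|D|)}\le1-\epsilon . \] Define \[ a_n=\min_{C\subseteq V,\,|C|=r}\ \min_{D\in\mathcal E_C}\left((1-\epsilon)\frac{\mathbb{E}_C[e(D)]}{|D|}\,h\!\left(\frac{c_D}{\rho_C}-1\right)-\log\frac r{|D|}\right). \] Then $a_n\to\infty$.
   Context: Setting. For each $n$ let $V=\{1,\dots,n\}$, let $p_{ij}=p_{ji}\in[0,1]$ ($i\ne j$) be edge probabilities, let $r=r_n$ be a community size, and for every $C\subseteq V$ with $|C|=r$ let $\rho_C>1$ with $\rho_Cp_{ij}\le1$ for $i,j\in C$. All may depend on $n$, and limits are as $n\to\infty$. A random simple graph on $V$ has adjacency matrix $A$. Under $\mathbb{P}_0$ the $A_{ij}$ ($i<j$) are independent $\mathrm{Bern}(p_{ij})$. Under $\mathbb{P}_C$ they are independent with $A_{ij}\sim\mathrm{Bern}(\rho_Cp_{ij})$ for $i,j\in C$ and $\mathrm{Bern}(p_{ij})$ otherwise. $\mathbb{E}_0,\mathbb{E}_C$ are the corresponding expectations; in particular $\mathbb{E}_C[e(D)]=\rho_C\mathbb{E}_0[e(D)]$ for $D\subseteq C$. Notation. $e(D)=\sum_{i<j,\ i,j\in D}A_{ij}$. $h(x)=(x+1)\log(x+1)-x$.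 For $|D|\ge2$, $\bar p_D=\mathbb{E}_0[e(D)]/\binom{|D|}2$. With $b_n=\log\log(n/r)$, for $C$ with $|C|=r$ define \[ \mathcal E_C=\Big\{D\subseteq C:\ (\rho_C-1)^2\,\mathbb{E}_0[e(D)]>(1-\epsilon/2)\,|D|\Big(\log\frac{n|D|}{r^2}-b_n\Big)\Big\}. \] For $D\in\mathcal E_C$, $c_D\ge1$ denotes the unique number with $(1+\epsilon)\mathbb{E}_0[e(D)]h(c_D-1)=|D|\log(n/|D|)$. Under the hypotheses this number exists for all large $n$. Assumption 1.1. There exists $\delta\in(0,1/2)$ with: (i) $r=O(n^{1/2-\delta})$; (ii) there exists $0<\gamma_n=o(1)$ such that $\max_{|C|=r}\max_{D\subseteq C,\,|D|<r/(n/r)^{\gamma_n}}\frac{|D|\bar p_D}{|C|\bar p_C}\le\delta$; (iii) $\max_{|C|=r}1/\bar p_C=o(r/\log(n/r))$. Assumption 1.2. (i) $r=n^{o(1)}$; (ii) $\max_{|C|=r}\log(1/\bar p_C)=o(\log(n/r)/\log r)$. Assumption 2. $\max_{|C|=r}\max_{i,j\in C}\rho_C^2p_{ij}\to0$. *)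

theory Defs
  imports "HOL-Analysis.Analysis" "HOL-Library.Landau_Symbols"
begin

definition E0e :: "(nat \<Rightarrow> nat \<Rightarrow> real) \<Rightarrow> nat set \<Rightarrow> real" where
  "E0e q D = (\<Sum>(i,j)\<in>{(i,j). i \<in> D \<and> j \<in> D \<and> i < j}. q i j)"

definition pbar :: "(nat \<Rightarrow> nat \<Rightarrow> real) \<Rightarrow> nat set \<Rightarrow> real" where
  "pbar q D = E0e q D / real (card D choose 2)"

definition hfun :: "real \<Rightarrow> real" where
  "hfun x = (x + 1) * ln (x + 1) - x"

definition EC :: "real \<Rightarrow> (nat \<Rightarrow> nat \<Rightarrow> real) \<Rightarrow> nat \<Rightarrow> nat \<Rightarrow> real \<Rightarrow> nat set \<Rightarrow> nat set set" where
  "EC eps q n r rhoC C = {D. D \<subseteq> C \<and>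
     (rhoC - 1)^2 * E0e q D >
       (1 - eps/2) * real (card D) *
         (ln (real n * real (card D) / (real r)^2) - ln (ln (real n / real r)))}"

definition cD :: "real \<Rightarrow> (nat \<Rightarrow> nat \<Rightarrow> real) \<Rightarrow> nat \<Rightarrow> nat set \<Rightarrow> real" where
  "cD eps q n D = (THE c. c \<ge> 1 \<and>
     (1 + eps) * E0e q D * hfun (c - 1) = real (card D) * ln (real n / real (card D)))"

end

theory Submission
  imports Defs
begin


lemma hfun_deriv: "y > -1 \<Longrightarrow> (hfun has_real_derivative ln (y+1)) (at y)"
  unfolding hfun_def
  by (auto intro!: derivative_eq_intros)

lemma quad_deriv: "y > -1 \<Longrightarrow> ((\<lambda>x::real. x^2/(2*(1+x))) has_real_derivative ((y^2 + 2*y)/(2*(1+y)^2))) (at y)"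
proof -
  assume y: "y > -1"
  have "((\<lambda>x::real. x^2/(2*(1+x))) has_real_derivative ((2*y*(2*(1+y)) - y^2*2)/((2*(1+y))^2))) (at y)"
    using y by (auto intro!: derivative_eq_intros simp: power2_eq_square)
  moreover have "(2*y*(2*(1+y)) - y^2*2)/((2*(1+y))^2) = (y^2 + 2*y)/(2*(1+y)^2)"
  proof -
    have e1: "(2*y*(2*(1+y)) - y^2*2) = 2*(y^2+2*y)" by (simp add: algebra_simps power2_eq_square)
    have e2: "(2*(1+y))^2 = 2*(2*(1+y)^2)" by (simp add: algebra_simps power2_eq_square)
    show ?thesis unfolding e1 e2 by (rule mult_divide_mult_cancel_left) simp
  qed
  ultimately show ?thesis by simp
qed

lemma h_quad_lb:
  fixes x :: real assumes "x \<ge> 0"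
  shows "x^2 / (2*(1+x)) \<le> hfun x"
proof -
  define f where "f = (\<lambda>x::real. hfun x - x^2/(2*(1+x)))"
  have "f 0 \<le> f x"
  proof (rule DERIV_nonneg_imp_nondecreasing[OF assms])
    fix y :: real assume y: "0 \<le> y" "y \<le> x"
    have d: "(f has_real_derivative (ln (y+1) - (y^2 + 2*y)/(2*(1+y)^2))) (at y)"
      unfolding f_def using y by (intro derivative_intros hfun_deriv quad_deriv) auto
    have "y/(1+y) \<le> ln (y+1)"
    proof -
      have "ln (1/(1+y)) \<le> 1/(1+y) - 1" using y by (intro ln_le_minus_one) auto
      then show ?thesis using y by (simp add: ln_div field_simps add.commute)
    qed
    moreover have "(y^2 + 2*y)/(2*(1+y)^2) \<le> y/(1+y)"
    proof -
      have "(y^2 + 2*y)/(2*(1+y)^2) = (y/(1+y)) * ((y+2)/(2*(1+y)))"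
        using y by (simp add: field_simps power2_eq_square)
      moreover have "(y+2)/(2*(1+y)) \<le> 1" using y by simp
      moreover have "y/(1+y) \<ge> 0" using y by simp
      ultimately show ?thesis by (metis mult_left_le)
    qed
    ultimately show "\<exists>d. (f has_real_derivative d) (at y) \<and> 0 \<le> d"
      using d by (intro exI[of _ "ln (y+1) - (y^2 + 2*y)/(2*(1+y)^2)"]) auto
  qed
  then show ?thesis by (simp add: f_def hfun_def)
qed

lemma h_nonneg: fixes x :: real assumes "x > -1" shows "hfun x \<ge> 0"
proof -
  have "ln (1/(1+x)) \<le> 1/(1+x) - 1" using assms by (intro ln_le_minus_one) auto
  then have "1 - 1/(1+x) \<le> ln (1+x)" using assms by (simp add: ln_div)
  then have "(1+x) * (1 - 1/(1+x)) \<le> (1+x) * ln (1+x)" using assms by (intro mult_left_mono) auto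
  moreover have "(1+x)*(1-1/(1+x)) = x" using assms by (simp add: field_simps)
  ultimately show ?thesis by (simp add: hfun_def add.commute)
qed

lemma breg_id:
  fixes a b :: real assumes "a > 0" "b > 0"
  shows "a * hfun (b/a - 1) = hfun (b-1) - hfun (a-1) - ln a * (b - a)"
  using assms by (simp add: hfun_def ln_div field_simps)

lemma breg_lb:
  fixes a c :: real assumes "0 < a" "a \<le> c"
  shows "(c-a)^2/(2*c) \<le> a * hfun (c/a - 1)"
proof -
  have x: "c/a - 1 \<ge> 0" using assms by (simp add: field_simps)
  have "(c-a)^2/(2*c) = a * ((c/a-1)^2/(2*(1+(c/a-1))))"
    using assms by (simp add: field_simps power2_eq_square)
  also have "\<dots> \<le> a * hfun (c/a - 1)"
    using h_quad_lb[OF x] assms by (intro mult_left_mono) auto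
  finally show ?thesis .
qed

lemma h_diff_ub:
  fixes a b :: real assumes "a > 0" "b > 0"
  shows "hfun (b-1) - hfun (a-1) \<le> ln b * (b - a)"
proof -
  have "0 \<le> b * hfun (a/b - 1)" using assms h_nonneg[of "a/b-1"] by auto
  also have "\<dots> = hfun (a-1) - hfun (b-1) - ln b * (a - b)" using breg_id[OF assms(2,1)] .
  finally show ?thesis by (simp add: algebra_simps)
qed

lemma h_strict_mono:
  fixes a b :: real assumes "1 \<le> a" "a < b"
  shows "hfun (a-1) < hfun (b-1)"
proof -
  have "0 < (b-a)^2/(2*b)" using assms by auto
  also have "\<dots> \<le> a * hfun (b/a - 1)" using breg_lb[of a b] assms by auto
  also have "\<dots> = hfun (b-1) - hfun (a-1) - ln a * (b - a)" using breg_id[of a b] assms by auto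
  also have "\<dots> \<le> hfun (b-1) - hfun (a-1)" using assms by auto
  finally show ?thesis by simp
qed

lemma h_mono:
  fixes a b :: real assumes "1 \<le> a" "a \<le> b"
  shows "hfun (a-1) \<le> hfun (b-1)"
  using h_strict_mono[of a b] assms by (cases "a = b") auto

lemma h_big: fixes c :: real assumes "c > exp 2" shows "hfun (c-1) > c"
proof -
  have "c > 0" using assms by (smt (verit) exp_gt_zero)
  have "ln c > 2" using assms \<open>c > 0\<close> by (metis ln_exp ln_less_cancel_iff exp_gt_zero)
  then have "c * ln c > c * 2" using \<open>c>0\<close> by simp
  then show ?thesis by (simp add: hfun_def)
qed

lemma L3aux: fixes u :: real assumes "u \<ge> 0" shows "exp u * (u^2 - 2) + 2 + 2*u \<ge> 0"
proof -
  define g where "g = (\<lambda>u::real. exp u * (u^2 + 2*u - 2) + 2)"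
  have g0: "g 0 \<le> g v" if "v \<ge> 0" for v
  proof (rule DERIV_nonneg_imp_nondecreasing[OF that])
    fix y :: real assume y: "0 \<le> y" "y \<le> v"
    have "(g has_real_derivative (exp y * (y^2 + 2*y - 2) + exp y * (2*y + 2))) (at y)"
      unfolding g_def by (auto intro!: derivative_eq_intros simp: power2_eq_square)
    moreover have "exp y * (y^2 + 2*y - 2) + exp y * (2*y + 2) \<ge> 0"
    proof -
      have "exp y * (y^2 + 2*y - 2) + exp y * (2*y + 2) = exp y * (y^2 + 4*y)" by (simp add: algebra_simps)
      also have "\<dots> \<ge> 0" using y by auto
      finally show ?thesis .
    qed
    ultimately show "\<exists>d. (g has_real_derivative d) (at y) \<and> 0 \<le> d" by blast
  qed
  define f where "f = (\<lambda>u::real. exp u * (u^2 - 2) + 2 + 2*u)"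
  have "f 0 \<le> f u"
  proof (rule DERIV_nonneg_imp_nondecreasing[OF assms])
    fix y :: real assume y: "0 \<le> y" "y \<le> u"
    have "(f has_real_derivative (exp y * (y^2 - 2) + exp y * (2*y) + 2)) (at y)"
      unfolding f_def by (auto intro!: derivative_eq_intros simp: power2_eq_square)
    moreover have "exp y * (y^2 - 2) + exp y * (2*y) + 2 = g y" by (simp add: g_def algebra_simps)
    moreover have "g y \<ge> 0" using g0[of y] y by (simp add: g_def)
    ultimately show "\<exists>d. (f has_real_derivative d) (at y) \<and> 0 \<le> d" by metis
  qed
  then show ?thesis by (simp add: f_def)
qed

lemma L3: fixes c :: real assumes "c \<ge> 1" shows "c * (ln c)^2 \<le> 2 * (1 + ln c) * hfun (c - 1)"
proof -
  define u where "u = ln c"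
  have c: "c = exp u" using assms by (simp add: u_def)
  have u: "u \<ge> 0" using assms by (simp add: u_def)
  have "2 * (1 + ln c) * hfun (c - 1) - c * (ln c)^2 = exp u * (u^2 - 2) + 2 + 2*u"
    unfolding hfun_def c by (simp add: algebra_simps power2_eq_square)
  then show ?thesis using L3aux[OF u] by linarith
qed



lemma key:
  fixes eps mu k L rho c :: real
  assumes e: "0<eps" "eps<1" and pos: "mu>0" "k>0" "L>0" and r1: "rho>1" and c1: "c\<ge>1"
    and hc: "(1+eps)*mu*hfun(c-1) = k*L" and hr: "mu*hfun(rho-1) \<le> (1-eps)*k*L"
  shows "(1-eps)*eps^4*L/(4*(1+eps)*(1+ln c)) \<le> (1-eps)*(rho*mu/k)*hfun(c/rho-1)"
proof -
  define pc where "pc = hfun(c-1)"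
  define pr where "pr = hfun(rho-1)"
  have nz: "(1+eps)*mu \<noteq> 0" using e pos by simp
  have pc: "pc = k*L/((1+eps)*mu)" unfolding pc_def using hc nz by (simp add: eq_divide_eq ac_simps)
  have pcpos: "pc > 0" unfolding pc using e pos by simp
  have "mu*pr \<le> (1-eps)*((1+eps)*mu*pc)" using hr hc unfolding pr_def pc_def by (simp add: mult.assoc)
  then have "mu*pr \<le> mu*((1-eps^2)*pc)" by (simp add: algebra_simps power2_eq_square)
  then have prle: "pr \<le> (1-eps^2)*pc" using pos by simp
  have prpos: "pr > 0" using h_strict_mono[of 1 rho] r1 by (simp add: pr_def hfun_def)
  have e2: "eps^2 > 0" using e by simp
  have crho: "c > rho"
  proof (rule ccontr)
    assume "\<not> c > rho"
    then have "pc \<le> pr" using h_mono[of c rho] c1 unfolding pc_def pr_def by simp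
    then show False using prle pcpos e2 by (smt (verit) mult_less_cancel_right2)
  qed
  have lnc: "ln c > 0" using crho r1 by simp
  have lnc1: "1 + ln c > 0" using lnc by linarith
  have "eps^2 * pc \<le> pc - pr" using prle by (simp add: algebra_simps)
  also have "\<dots> \<le> ln c * (c - rho)" using h_diff_ub[of rho c] r1 crho unfolding pc_def pr_def by simp
  finally have d1: "eps^2 * pc / ln c \<le> c - rho" using lnc by (simp add: field_simps)
  have d1': "(eps^2 * pc / ln c)^2 \<le> (c - rho)^2"
    using d1 pcpos e2 lnc by (intro power_mono) auto
  have "eps^4*pc/(4*(1+ln c)) \<le> (eps^2 * pc / ln c)^2 / (2*c)"
  proof -
    have l3: "c * (ln c)^2 \<le> 2 * (1 + ln c) * pc" using L3[OF c1] unfolding pc_def .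
    have "(eps^2 * pc / ln c)^2 / (2*c) = eps^4*pc*pc/(2*(c*(ln c)^2))"
      by (simp add: power2_eq_square power4_eq_xxxx field_simps)
    also have "\<dots> \<ge> eps^4*pc*pc/(2*(2 * (1 + ln c) * pc))"
    proof (rule divide_left_mono)
      have p1: "0 < 2*(c*(ln c)^2)" using lnc c1 by simp
      have p2: "0 < 2*(2*(1+ln c)*pc)" by (intro mult_pos_pos lnc1 pcpos) simp_all
      show "0 < 2*(2*(1+ln c)*pc) * (2*(c*(ln c)^2))" using p1 p2 by (rule mult_pos_pos[rotated])
      show "2*(c*(ln c)^2) \<le> 2*(2*(1+ln c)*pc)" using l3 by simp
      show "0 \<le> eps^4*pc*pc" using pcpos by simp
    qed
    also have "eps^4*pc*pc/(2*(2 * (1 + ln c) * pc)) = eps^4*pc/(4*(1+ln c))"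
    proof -
      have "eps^4*pc*pc/(2*(2 * (1 + ln c) * pc)) = (pc * (eps^4*pc))/(pc * (4*(1+ln c)))"
        by (simp add: ac_simps)
      also have "\<dots> = eps^4*pc/(4*(1+ln c))" using pcpos by (rule mult_divide_mult_cancel_left[OF less_imp_neq[symmetric]])
      finally show ?thesis .
    qed
    finally show ?thesis .
  qed
  also have "\<dots> \<le> (c-rho)^2/(2*c)" using d1' c1 by (intro divide_right_mono) auto
  also have "\<dots> \<le> rho * hfun(c/rho-1)" using breg_lb[of rho c] r1 crho by simp
  finally have m: "eps^4*pc/(4*(1+ln c)) \<le> rho * hfun(c/rho-1)" .
  have "(1-eps)*eps^4*L/(4*(1+eps)*(1+ln c)) = (1-eps)*(mu/k)*(eps^4*pc/(4*(1+ln c)))"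
  proof -
    have nz2: "mu + eps*mu \<noteq> 0" "1 + eps \<noteq> 0" using pos e by (smt (verit) mult_pos_pos)+
    have mk: "(mu/k)*pc = L/(1+eps)" unfolding pc using pos nz2 by (simp add: field_simps)
    have "(1-eps)*(mu/k)*(eps^4*pc/(4*(1+ln c))) = (1-eps)*eps^4*((mu/k)*pc)/(4*(1+ln c))"
      by (simp add: ac_simps)
    also have "\<dots> = (1-eps)*eps^4*L/(4*(1+eps)*(1+ln c))" unfolding mk using e by (simp add: field_simps)
    finally show ?thesis by simp
  qed
  also have "\<dots> \<le> (1-eps)*(mu/k)*(rho * hfun(c/rho-1))"
    using m e pos by (intro mult_left_mono) auto
  finally show ?thesis by (simp add: algebra_simps)
qed



lemma cD_prop:
  assumes e: "0 < eps" and mu: "E0e q D > 0" and y: "real (card D) * ln (real n / real (card D)) \<ge> 0"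
  shows "cD eps q n D \<ge> 1 \<and> (1 + eps) * E0e q D * hfun (cD eps q n D - 1) = real (card D) * ln (real n / real (card D))"
proof -
  define A where "A = (1 + eps) * E0e q D"
  define Y where "Y = real (card D) * ln (real n / real (card D))"
  have A: "A > 0" using e mu by (simp add: A_def)
  have Y: "Y \<ge> 0" using y by (simp add: Y_def)
  define b where "b = Y/A + exp 2 + 1"
  have b: "b > exp 2" "b \<ge> 1" using Y A by (auto simp: b_def) (smt (verit) divide_nonneg_pos exp_gt_zero)
  have "hfun (b - 1) > b" using h_big b by simp
  then have hb: "A * hfun (b - 1) \<ge> Y"
  proof -
    have "Y = A * (Y/A)" using A by simp
    also have "\<dots> \<le> A * b" using A Y by (intro mult_left_mono) (auto simp: b_def)
    also have "\<dots> \<le> A * hfun (b-1)" using A \<open>hfun (b - 1) > b\<close> by (intro mult_left_mono) auto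
    finally show ?thesis .
  qed
  have cont: "continuous_on {1..b} (\<lambda>x. A * hfun (x - 1))"
    unfolding hfun_def by (auto intro!: continuous_intros)
  have "\<exists>x. 1 \<le> x \<and> x \<le> b \<and> A * hfun (x - 1) = Y"
    by (rule IVT') (use Y hb b cont in \<open>auto simp: hfun_def\<close>)
  then obtain x where x: "x \<ge> 1" "A * hfun (x - 1) = Y" by blast
  have ex1: "\<exists>!c. c \<ge> 1 \<and> A * hfun (c - 1) = Y"
  proof (rule ex1I[of _ x])
    show "x \<ge> 1 \<and> A * hfun (x - 1) = Y" using x by simp
    fix c assume c: "c \<ge> 1 \<and> A * hfun (c - 1) = Y"
    show "c = x"
    proof (rule ccontr)
      assume "c \<noteq> x"
      then have "hfun (c-1) \<noteq> hfun (x-1)" using h_strict_mono[of c x] h_strict_mono[of x c] c x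
        by (cases "c < x") auto
      moreover have "A * hfun (c - 1) = A * hfun (x - 1)" using c x by simp
      ultimately show False using A by simp
    qed
  qed
  have "cD eps q n D = (THE c. c \<ge> 1 \<and> A * hfun (c - 1) = Y)"
    unfolding cD_def A_def Y_def ..
  then show ?thesis using theI'[OF ex1] unfolding A_def Y_def by simp
qed

lemma card_ge2_of_E0e:
  assumes "finite D" "E0e q D \<noteq> 0" shows "card D \<ge> 2"
proof (rule ccontr)
  assume "\<not> card D \<ge> 2"
  then have "card D \<le> 1" by simp
  then have "\<forall>a\<in>D. \<forall>b\<in>D. a = b" using card_le_Suc0_iff_eq[OF assms(1)] by simp
  then have pe: "{(i,j). i \<in> D \<and> j \<in> D \<and> i < j} = {}" by auto
  have "E0e q D = 0" unfolding E0e_def pe by simp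
  then show False using assms(2) by simp
qed

lemma choose2_real: "real (k choose 2) = real k * (real k - 1) / 2"
proof (cases k)
  case 0 then show ?thesis by simp
next
  case (Suc m)
  have "even (k * (k - 1))" by (simp add: even_mult_iff) presburger
  then have "real (k * (k - 1) div 2) = real (k * (k-1)) / 2"
    by (simp add: real_of_nat_div)
  then show ?thesis using Suc by (simp add: choose_two of_nat_diff algebra_simps)
qed

lemma E0e_pbar: "card D \<ge> 2 \<Longrightarrow> E0e q D = pbar q D * real (card D choose 2)"
proof -
  assume "card D \<ge> 2"
  then have "(card D choose 2) > 0" by simp
  then show ?thesis by (simp add: pbar_def)
qed

lemma pairs_card_le:
  assumes "finite D" shows "card {(i,j). i \<in> D \<and> j \<in> D \<and> (i::nat) < j} \<le> card D choose 2"
proof -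
  let ?P = "{(i,j). i \<in> D \<and> j \<in> D \<and> (i::nat) < j}"
  have "inj_on (\<lambda>(i,j). {i,j}) ?P"
    by (auto simp: inj_on_def doubleton_eq_iff)
  moreover have "(\<lambda>(i,j). {i,j}) ` ?P \<subseteq> {B. B \<subseteq> D \<and> card B = 2}" by auto
  moreover have "finite {B. B \<subseteq> D \<and> card B = 2}" using assms by simp
  ultimately have "card ?P \<le> card {B. B \<subseteq> D \<and> card B = 2}" by (intro card_inj_on_le) auto
  also have "\<dots> = card D choose 2" using n_subsets[OF assms] .
  finally show ?thesis .
qed

lemma E0e_le:
  assumes "finite D" "B \<ge> 0" "\<And>i j. i \<in> D \<Longrightarrow> j \<in> D \<Longrightarrow> i < j \<Longrightarrow> q i j \<le> B"
  shows "E0e q D \<le> B * real (card D choose 2)"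
proof -
  let ?P = "{(i,j). i \<in> D \<and> j \<in> D \<and> (i::nat) < j}"
  have "?P \<subseteq> D \<times> D" by auto
  then have fin: "finite ?P" by (rule finite_subset) (simp add: assms(1))
  have "E0e q D \<le> (\<Sum>x\<in>?P. B)" unfolding E0e_def by (intro sum_mono) (use assms(3) in auto)
  also have "\<dots> = B * real (card ?P)" by simp
  also have "\<dots> \<le> B * real (card D choose 2)" using pairs_card_le[OF assms(1)] assms(2) by (intro mult_left_mono) auto
  finally show ?thesis .
qed



lemma ev_lin_ln:
  fixes w B :: real assumes w: "w > 0"
  shows "eventually (\<lambda>a. w*a - B - ln a \<ge> 0) at_top"
proof -
  have "eventually (\<lambda>x. ln x / x < w/2) at_top"
    using ln_x_over_x_tendsto_0 by (rule order_tendstoD) (use w in simp)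
  moreover have "eventually (\<lambda>x. x \<ge> max 1 (2*B/w)) at_top" by (rule eventually_ge_at_top)
  ultimately show ?thesis
  proof eventually_elim
    case (elim x)
    then have x: "x > 0" by simp
    have "ln x < w*x/2" using elim(1) x by (simp add: divide_less_eq mult.commute)
    moreover have "w*x \<ge> 2*B" using elim(2) w by (simp add: divide_le_eq mult.commute)
    ultimately show ?case by linarith
  qed
qed

lemma ev_ln_seq: "eventually P at_top \<Longrightarrow> eventually (\<lambda>n::nat. P (ln (real n))) sequentially"
  using eventually_compose_filterlim filterlim_compose[OF ln_at_top filterlim_real_sequentially] by blast

lemma rho_bound_abs:
  fixes R Lam pC muC ph xi eta :: real
  assumes R: "R \<ge> 2" and Lam: "Lam > 0" and pC: "pC > 0" and inv: "1/pC \<le> eta*(R/Lam)"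
    and eta: "eta = xi^2/(16*(1+xi))" and xi: "xi > 0" and muC: "muC = pC * (R*(R-1)/2)"
    and le: "muC*ph \<le> R*Lam" and ph: "ph \<ge> xi^2/(2*(1+xi))"
  shows False
proof -
  have etapos: "eta > 0" using eta xi by simp
  have "Lam/(eta*R) \<le> pC" using inv pC Lam etapos R by (simp add: field_simps)
  have "4*(R-1)*Lam = (R*(R-1)/2) * (Lam/(eta*R)) * (xi^2/(2*(1+xi)))"
  proof -
    have nz: "xi \<noteq> 0" "1+xi \<noteq> 0" "R \<noteq> 0" "eta \<noteq> 0" using R xi etapos by auto
    have e16: "xi^2 = 16*eta*(1+xi)" unfolding eta using nz by (simp add: field_simps)
    have aux: "\<And>B::real. B \<noteq> 0 \<Longrightarrow> (R*(R-1)/2) * (Lam/(eta*R)) * (16*eta*B/(2*B)) = 4*(R-1)*Lam"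
      using nz by (simp add: field_simps)
    show ?thesis unfolding e16 using aux[OF nz(2)] by simp
  qed
  also have "\<dots> \<le> (R*(R-1)/2) * pC * ph"
    using \<open>Lam/(eta*R) \<le> pC\<close> ph R Lam etapos xi pC
    by (intro mult_mono) (auto intro!: divide_nonneg_pos mult_nonneg_nonneg)
  also have "\<dots> = muC * ph" using muC by simp
  also have "\<dots> \<le> R*Lam" using le .
  finally have "4*(R-1)*Lam \<le> R*Lam" .
  then have "4*(R-1) \<le> R" using Lam by simp
  then show False using R by simp
qed

lemma small_abs:
  fixes kk R mC mD pC pD rho eps delta Lam E xi beta :: real
  assumes kk: "kk \<ge> 1" "kk \<le> R" and R: "R \<ge> 2" and pC: "pC > 0"
    and ii: "kk*pD \<le> delta*R*pC" and mD: "mD = pD*(kk*(kk-1)/2)" and mC: "mC = pC*(R*(R-1)/2)"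
    and cC: "(rho-1)^2*mC \<le> 2*rho*(1-eps)*R*Lam" and rho: "rho \<le> 1+xi" "rho > 1"
    and beta: "beta = 2*delta*(1+xi)" and bE: "beta*Lam \<le> E"
    and e: "0<eps" "eps<1" and d: "delta > 0" and Lam: "Lam > 0"
  shows "(rho-1)^2*mD \<le> (1-eps/2)*kk*E"
proof -
  have "(rho-1)^2*mD = (kk-1)/2 * (rho-1)^2 * (kk*pD)" unfolding mD by (simp add: field_simps)
  also have "\<dots> \<le> (kk-1)/2 * (rho-1)^2 * (delta*R*pC)"
    using ii kk by (intro mult_left_mono) auto
  also have "\<dots> = delta*((kk-1)/(R-1)) * ((rho-1)^2 * mC)"
    using R unfolding mC by (simp add: field_simps)
  also have "\<dots> \<le> delta*((kk-1)/(R-1)) * (2*rho*(1-eps)*R*Lam)"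
    using cC d kk R by (intro mult_left_mono) auto
  also have "\<dots> = delta*2*rho*(1-eps)*Lam * ((kk-1)*R/(R-1))" by (simp add: field_simps)
  also have "\<dots> \<le> delta*2*rho*(1-eps)*Lam * kk"
  proof (rule mult_left_mono)
    show "(kk-1)*R/(R-1) \<le> kk" using kk R by (simp add: field_simps)
    show "0 \<le> delta*2*rho*(1-eps)*Lam" using d rho e Lam by simp
  qed
  also have "\<dots> \<le> delta*2*(1+xi)*(1-eps/2)*Lam * kk"
    using rho e d Lam kk by (intro mult_right_mono mult_left_mono mult_mono) auto
  also have "\<dots> = (1-eps/2)*kk*(beta*Lam)" unfolding beta by (simp add: algebra_simps)
  also have "\<dots> \<le> (1-eps/2)*kk*E" using bE e kk by (intro mult_left_mono) auto
  finally show ?thesis .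
qed

lemma gen:
  fixes q :: "nat \<Rightarrow> nat \<Rightarrow> real" and n r :: nat and rhoC :: real and C D :: "nat set"
  assumes e: "0<eps" "eps<1"
   and C: "C \<subseteq> {1..n}" "card C = r"
   and D: "D \<in> EC eps q n r rhoC C"
   and rn: "r < n"
   and pos: "ln(real n * real(card D)/(real r)^2) - ln(ln(real n/real r)) > 0"
   and rho: "rhoC > 1"
   and cnd: "E0e q D * hfun(rhoC - 1)/(real(card D) * ln(real n/real(card D))) \<le> 1 - eps"
  shows "2 \<le> card D \<and> card D \<le> r \<and> E0e q D > 0 \<and> cD eps q n D \<ge> 1
     \<and> (1+eps)*E0e q D*hfun(cD eps q n D - 1) = real(card D)*ln(real n/real(card D))
     \<and> (1-eps)*eps^4*ln(real n/real(card D))/(4*(1+eps)*(1+ln(cD eps q n D)))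
        \<le> (1-eps)*(rhoC*E0e q D/real(card D))*hfun(cD eps q n D/rhoC - 1)"
proof -
  have DC: "D \<subseteq> C" and ec: "(rhoC - 1)^2 * E0e q D >
       (1 - eps/2) * real (card D) * (ln (real n * real (card D) / (real r)^2) - ln (ln (real n / real r)))"
    using D by (auto simp: EC_def)
  have finC: "finite C" using C(1) finite_subset by blast
  have finD: "finite D" using DC finC finite_subset by blast
  have "(1 - eps/2) * real (card D) * (ln (real n * real (card D) / (real r)^2) - ln (ln (real n / real r))) \<ge> 0"
    using e pos by simp
  then have "(rhoC - 1)^2 * E0e q D > 0" using ec by linarith
  then have mu: "E0e q D > 0" using zero_less_mult_pos by (metis zero_le_power2 less_le_not_le mult_nonneg_nonpos not_le)
  have k2: "card D \<ge> 2" using card_ge2_of_E0e[OF finD, of q] mu by simp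
  have kr: "card D \<le> r" using card_mono[OF finC DC] C by simp
  have kn: "real (card D) < real n" using kr rn by simp
  have kpos: "real (card D) > 0" using k2 by simp
  have L: "ln (real n / real (card D)) > 0" using kn kpos by simp
  have cDp: "cD eps q n D \<ge> 1 \<and> (1+eps)*E0e q D*hfun(cD eps q n D - 1) = real(card D)*ln(real n/real(card D))"
    using cD_prop[OF e(1) mu] L kpos by simp
  have hr: "E0e q D * hfun(rhoC - 1) \<le> (1-eps)*real(card D)*ln(real n/real(card D))"
    using cnd L kpos by (simp add: divide_le_eq mult.assoc)
  have "(1-eps)*eps^4*ln(real n/real(card D))/(4*(1+eps)*(1+ln(cD eps q n D)))
        \<le> (1-eps)*(rhoC*E0e q D/real(card D))*hfun(cD eps q n D/rhoC - 1)"
    by (rule key[OF e mu kpos L rho]) (use cDp hr in auto)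
  then show ?thesis using k2 kr mu cDp by simp
qed



lemma ln3: "x > 0 \<Longrightarrow> y > 0 \<Longrightarrow> z > 0 \<Longrightarrow> ln (x*y/z^2) = ln x + ln y - 2 * ln (z::real)"
  by (simp add: ln_mult ln_div ln_realpow)

lemma exp2_gt2: "exp (2::real) > 2"
  using exp_ge_add_one_self[of 2] by simp

lemma F3_abs:
  fixes s lK sg a bt om Lm :: real
  assumes "s \<le> lK + sg*a" "0 \<le> s" "2 - bt > 0" "om = (1-bt) - (2-bt)* sg"
    "om*a - (2-bt)*lK - ln a \<ge> 0" "Lm = a - s" "Lm > 0"
  shows "bt*Lm \<le> a - 2* s - ln Lm"
proof -
  have "ln Lm \<le> ln a" using assms by simp
  have m: "(2-bt)* s \<le> (2-bt)*(lK+sg*a)" using assms by (intro mult_left_mono) auto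
  have e1: "a - 2* s - bt*Lm = (1-bt)*a - (2-bt)* s" unfolding assms(6) by (simp add: algebra_simps)
  have e2: "(1-bt)*a - (2-bt)*(lK+sg*a) = om*a - (2-bt)*lK" unfolding assms(4) by (simp add: algebra_simps)
  show ?thesis using e1 e2 m \<open>ln Lm \<le> ln a\<close> assms(5) by linarith
qed

lemma case11:
  fixes p :: "nat \<Rightarrow> nat \<Rightarrow> nat \<Rightarrow> real"
    and r :: "nat \<Rightarrow> nat"
    and rho :: "nat \<Rightarrow> nat set \<Rightarrow> real"
    and eps M \<delta> K :: real and \<gamma> :: "nat \<Rightarrow> real"
  assumes eps: "0 < eps" "eps < 1"
    and rho_gt1: "\<And>n C. C \<subseteq> {1..n} \<Longrightarrow> card C = r n \<Longrightarrow> rho n C > 1"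
    and cond: "eventually (\<lambda>n. \<forall>C D. C \<subseteq> {1..n} \<and> card C = r n \<and> D \<subseteq> C \<and> D \<noteq> {} \<longrightarrow>
                  E0e (p n) D * hfun (rho n C - 1) / (real (card D) * ln (real n / real (card D))) \<le> 1 - eps)
               sequentially"
    and \<delta>: "0 < \<delta>" "\<delta> < 1/2" and K: "K > 0"
    and evK: "eventually (\<lambda>n. real (r n) \<le> K * real n powr (1/2 - \<delta>)) sequentially"
    and \<gamma>: "\<gamma> \<longlonglongrightarrow> 0"
    and evii: "eventually (\<lambda>n. \<forall>C D. C \<subseteq> {1..n} \<and> card C = r n \<and> D \<subseteq> C \<and>
                        real (card D) < real (r n) / (real n / real (r n)) powr \<gamma> n
                      \<longrightarrow> real (card D) * pbar (p n) D / (real (card C) * pbar (p n) C) \<le> \<delta>) sequentially"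
    and iii: "\<forall>\<eta>>0. eventually (\<lambda>n. \<forall>C. C \<subseteq> {1..n} \<and> card C = r n \<longrightarrow>
                        pbar (p n) C > 0 \<and>
                        1 / pbar (p n) C \<le> \<eta> * (real (r n) / ln (real n / real (r n)))) sequentially"
  shows "eventually (\<lambda>n. \<forall>C D. C \<subseteq> {1..n} \<and> card C = r n \<and> D \<in> EC eps (p n) n (r n) (rho n C) C \<longrightarrow>
            M \<le> (1 - eps) * (rho n C * E0e (p n) D / real (card D)) * hfun (cD eps (p n) n D / rho n C - 1)
                 - ln (real (r n) / real (card D))) sequentially"
proof -
  define \<sigma> where "\<sigma> = 1/2 - \<delta>"
  define \<xi> where "\<xi> = (1 - 2*\<delta>)/(2*(1+2*\<delta>))"
  define \<beta> where "\<beta> = 2*\<delta>*(1+\<xi>)"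
  define \<omega> where "\<omega> = (1-\<beta>) - (2-\<beta>)*\<sigma>"
  define \<kappa> where "\<kappa> = (1-eps)*eps^4/(4*(1+eps))"
  define \<eta>1 where "\<eta>1 = \<xi>^2/(16*(1+\<xi>))"
  define \<gamma>0 where "\<gamma>0 = min (1/8) (\<kappa>/6)"
  have \<kappa>: "\<kappa> > 0" using eps by (simp add: \<kappa>_def)
  have \<xi>: "\<xi> > 0" "\<xi> \<le> 1" using \<delta> by (auto simp: \<xi>_def field_simps)
  have \<eta>1: "\<eta>1 > 0" using \<xi> by (simp add: \<eta>1_def)
  have \<gamma>0: "\<gamma>0 > 0" using \<kappa> by (simp add: \<gamma>0_def)
  have d12: "1 + 2*\<delta> \<noteq> 0" using \<delta> by simp
  have \<beta>eq: "\<beta> = \<delta>*(3+2*\<delta>)/(1+2*\<delta>)" unfolding \<beta>_def \<xi>_def using d12 by (simp add: field_simps)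
  have \<omega>: "\<omega> = \<delta>*(1-2*\<delta>)/2"
  proof -
    have "\<omega> = 2*\<delta> - \<beta>*(1+2*\<delta>)/2" unfolding \<omega>_def \<sigma>_def by (simp add: field_simps)
    also have "\<beta>*(1+2*\<delta>) = \<delta>*(3+2*\<delta>)" unfolding \<beta>eq using d12 by simp
    finally show ?thesis by (simp add: field_simps)
  qed
  have \<omega>pos: "\<omega> > 0" using \<delta> unfolding \<omega> by simp
  have dd: "\<delta>*\<delta> \<le> \<delta>*(1/2)" using \<delta> by (intro mult_left_mono) auto
  have "\<beta> \<le> 2*\<delta>*2" unfolding \<beta>_def using \<xi> \<delta> by (intro mult_left_mono) auto
  then have \<beta>2: "2 - \<beta> > 0" using \<delta> by linarith
  have \<sigma>1: "1 - \<sigma> > 0" using \<delta> by (simp add: \<sigma>_def)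
  obtain X0 :: real where X0: "\<And>x::real. x \<ge> X0 \<Longrightarrow> (1/4)*x - 0 - ln x \<ge> 0"
    using ev_lin_ln[of "1/4" 0] by (auto simp: eventually_at_top_linorder)
  define \<Lambda>0 where "\<Lambda>0 = max (max X0 1) (6*M/\<kappa>)"
  have E2: "eventually (\<lambda>n. \<gamma> n < \<gamma>0) sequentially"
    using \<gamma> \<gamma>0 by (rule order_tendstoD)
  have E4: "eventually (\<lambda>n. \<forall>C. C \<subseteq> {1..n} \<and> card C = r n \<longrightarrow>
                        pbar (p n) C > 0 \<and>
                        1 / pbar (p n) C \<le> \<eta>1 * (real (r n) / ln (real n / real (r n)))) sequentially"
    using iii \<eta>1 by blast
  have E6: "eventually (\<lambda>n. ln (real n) \<ge> (\<Lambda>0 + ln K)/(1-\<sigma>)) sequentially"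
    by (rule ev_ln_seq) (rule eventually_ge_at_top)
  have E7: "eventually (\<lambda>n. \<omega> * ln (real n) - (2-\<beta>) * ln K - ln (ln (real n)) \<ge> 0) sequentially"
    by (rule ev_ln_seq) (rule ev_lin_ln[OF \<omega>pos])
  show ?thesis using evK E2 evii E4 cond E6 E7
  proof eventually_elim
    case (elim n)
    show ?case
    proof (intro allI impI)
      fix C D assume CD: "C \<subseteq> {1..n} \<and> card C = r n \<and> D \<in> EC eps (p n) n (r n) (rho n C) C"
      show "M \<le> (1 - eps) * (rho n C * E0e (p n) D / real (card D)) * hfun (cD eps (p n) n D / rho n C - 1)
                 - ln (real (r n) / real (card D))"
      proof -
        from CD have C: "C \<subseteq> {1..n}" "card C = r n" and DEC: "D \<in> EC eps (p n) n (r n) (rho n C) C" by auto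
        have finC: "finite C" using C(1) finite_subset by blast
        from elim(4) C have pC: "pbar (p n) C > 0"
          and inv: "1/pbar (p n) C \<le> \<eta>1 * (real (r n)/ln(real n/real (r n)))" by auto
        have r2: "r n \<ge> 2"
        proof (rule ccontr)
          assume "\<not> r n \<ge> 2"
          then have "card C choose 2 = 0" using C by (simp add: binomial_eq_0)
          then have "pbar (p n) C = 0" by (simp add: pbar_def)
          with pC show False by simp
        qed
        have "r n \<le> n" using card_mono[OF _ C(1)] C by simp
        define R where "R = real (r n)"
        define a where "a = ln (real n)"
        define s where "s = ln R"
        define \<Lambda> where "\<Lambda> = ln (real n / R)"
        have R2: "R \<ge> 2" using r2 by (simp add: R_def)
        have npos: "real n > 0" using \<open>r n \<le> n\<close> r2 by simp
        have \<Lambda>eq: "\<Lambda> = a - s" unfolding \<Lambda>_def a_def s_def using R2 npos by (simp add: ln_div)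
        have s0: "s \<ge> 0" using R2 by (simp add: s_def)
        have sle: "s \<le> ln K + \<sigma>*a"
        proof -
          have "R \<le> K * real n powr \<sigma>" using elim(1) by (simp add: R_def \<sigma>_def)
          then have "ln R \<le> ln (K * real n powr \<sigma>)" using R2 by simp
          also have "\<dots> = ln K + \<sigma>*a" using K npos by (simp add: ln_mult a_def)
          finally show ?thesis by (simp add: s_def)
        qed
        have "(1-\<sigma>)*a \<ge> \<Lambda>0 + ln K" using elim(6) \<sigma>1 by (simp add: a_def divide_le_eq mult.commute)
        then have \<Lambda>\<Lambda>0: "\<Lambda> \<ge> \<Lambda>0" using \<Lambda>eq sle by (simp add: algebra_simps)
        have \<Lambda>1: "\<Lambda> \<ge> 1" and \<Lambda>X: "\<Lambda> \<ge> X0" and \<Lambda>M: "\<Lambda> \<ge> 6*M/\<kappa>" using \<Lambda>\<Lambda>0 by (auto simp: \<Lambda>0_def)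
        have ln\<Lambda>: "ln \<Lambda> \<le> \<Lambda>/4" using X0[OF \<Lambda>X] by simp
        have \<kappa>\<Lambda>: "\<kappa>*\<Lambda>/6 \<ge> M" using \<Lambda>M \<kappa> by (simp add: divide_le_eq mult.commute)
        have rn: "r n < n"
        proof -
          have q: "real n / R > 0" using npos R2 by simp
          have "real n / R > 1"
          proof (rule ccontr)
            assume "\<not> real n / R > 1"
            then have "ln (real n / R) \<le> 0" using q by simp
            with \<Lambda>1 show False by (simp add: \<Lambda>_def)
          qed
          then show ?thesis using R2 by (simp add: R_def field_simps)
        qed
        have F3: "\<beta>*\<Lambda> \<le> (a - 2* s) - ln \<Lambda>"
          by (rule F3_abs[OF sle s0 \<beta>2 \<omega>_def _ \<Lambda>eq]) (use elim(7) \<Lambda>1 in \<open>auto simp: a_def\<close>)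
        define \<rho> where "\<rho> = rho n C"
        have \<rho>1: "\<rho> > 1" using rho_gt1 C by (simp add: \<rho>_def)
        define mC where "mC = E0e (p n) C"
        define pC where "pC = pbar (p n) C"
        have mC: "mC = pC * (R*(R-1)/2)"
          using E0e_pbar[of C "p n"] C r2 by (simp add: mC_def pC_def choose2_real R_def)
        have pCpos: "pC > 0" using pC by (simp add: pC_def)
        have Cne: "C \<noteq> {}" using C r2 by auto
        have "E0e (p n) C * hfun(rho n C - 1)/(real(card C)*ln(real n/real(card C))) \<le> 1-eps"
          using elim(5) C Cne by blast
        then have "mC * hfun (\<rho> - 1) / (R * \<Lambda>) \<le> 1 - eps"
          using C by (simp add: mC_def \<rho>_def R_def \<Lambda>_def)
        then have cC0: "mC * hfun (\<rho> - 1) \<le> (1-eps) * R * \<Lambda>"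
          using R2 \<Lambda>1 by (simp add: divide_le_eq mult.assoc)
        have \<rho>\<xi>: "\<rho> \<le> 1 + \<xi>"
        proof (rule ccontr)
          assume "\<not> \<rho> \<le> 1 + \<xi>"
          then have "hfun ((1+\<xi>) - 1) \<le> hfun (\<rho> - 1)" using h_mono[of "1+\<xi>" \<rho>] \<xi> by simp
          moreover have "((1+\<xi>)-1)^2/(2*(1+\<xi>)) \<le> 1 * hfun ((1+\<xi>)/1 - 1)" using breg_lb[of 1 "1+\<xi>"] \<xi> by simp
          ultimately have ph: "hfun (\<rho> - 1) \<ge> \<xi>^2/(2*(1+\<xi>))" by simp
          have le: "mC * hfun (\<rho> - 1) \<le> R * \<Lambda>"
          proof -
            have "(1-eps) * R * \<Lambda> \<le> R * \<Lambda>" using eps R2 \<Lambda>1 by simp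
            then show ?thesis using cC0 by linarith
          qed
          have inv': "1/pC \<le> \<eta>1*(R/\<Lambda>)" using inv by (simp add: pC_def R_def \<Lambda>_def)
          show False
            by (rule rho_bound_abs[OF R2 _ pCpos inv' \<eta>1_def \<xi>(1) mC le ph]) (use \<Lambda>1 in simp)
        qed
        have cC: "(\<rho>-1)^2*mC \<le> 2*\<rho>*(1-eps)*R*\<Lambda>"
        proof -
          have b: "(\<rho>-1)^2/(2*\<rho>) \<le> hfun (\<rho> - 1)" using breg_lb[of 1 \<rho>] \<rho>1 by simp
          have mC0: "mC \<ge> 0" unfolding mC using pCpos R2 by (intro mult_nonneg_nonneg divide_nonneg_pos) auto
          have "(\<rho>-1)^2*mC = 2*\<rho>*((\<rho>-1)^2/(2*\<rho>))*mC" using \<rho>1 by simp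
          also have "\<dots> \<le> 2*\<rho>*hfun (\<rho> - 1)*mC" using b mC0 \<rho>1 by (intro mult_right_mono mult_left_mono) auto
          also have "\<dots> = 2*\<rho>*(mC*hfun (\<rho> - 1))" by simp
          also have "\<dots> \<le> 2*\<rho>*((1-eps) * R * \<Lambda>)" using cC0 \<rho>1 by (intro mult_left_mono) auto
          finally show ?thesis by simp
        qed
        have DC: "D \<subseteq> C" using DEC by (simp add: EC_def)
        have finD: "finite D" using DC finC finite_subset by blast
        define k where "k = real (card D)"
        have Dne: "D \<noteq> {}"
        proof
          assume "D = {}"
          then show False using DEC by (simp add: EC_def E0e_def)
        qed
        have k1: "k \<ge> 1" using Dne finD by (simp add: k_def Suc_le_eq card_gt_0_iff)
        define E where "E = ln (real n * k / R^2) - ln \<Lambda>"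
        have lnnk: "ln (real n * k / R^2) = a + ln k - 2 * s"
          unfolding a_def s_def using ln3[of "real n" k R] npos k1 R2 by simp
        have \<beta>pos: "\<beta> > 0" using \<delta> \<xi> by (simp add: \<beta>_def)
        have lnk0: "ln k \<ge> 0" using k1 by simp
        have EbL: "\<beta>*\<Lambda> \<le> E" using F3 lnnk lnk0 unfolding E_def by linarith
        have Epos: "E > 0" using EbL \<beta>pos \<Lambda>1 by (smt (verit) mult_pos_pos)
        have G: "2 \<le> card D \<and> card D \<le> r n \<and> E0e (p n) D > 0 \<and> cD eps (p n) n D \<ge> 1
           \<and> (1+eps)*E0e (p n) D*hfun(cD eps (p n) n D - 1) = real(card D)*ln(real n/real(card D))
           \<and> (1-eps)*eps^4*ln(real n/real(card D))/(4*(1+eps)*(1+ln(cD eps (p n) n D)))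
              \<le> (1-eps)*(rho n C*E0e (p n) D/real(card D))*hfun(cD eps (p n) n D/rho n C - 1)"
        proof (rule gen[OF eps C DEC rn])
          show "ln(real n * real(card D)/(real (r n))^2) - ln(ln(real n/real (r n))) > 0"
            using Epos by (simp add: E_def k_def R_def \<Lambda>_def)
          show "rho n C > 1" using \<rho>1 by (simp add: \<rho>_def)
          show "E0e (p n) D * hfun(rho n C - 1)/(real(card D) * ln(real n/real(card D))) \<le> 1 - eps"
            using elim(5) C DC Dne by blast
        qed
        define mu where "mu = E0e (p n) D"
        define c where "c = cD eps (p n) n D"
        define L where "L = ln (real n / k)"
        have k2: "k \<ge> 2" and kR: "k \<le> R" and mu: "mu > 0" and c1: "c \<ge> 1"
          and ceq: "(1+eps)*mu*hfun(c - 1) = k*L"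
          and keyi: "(1-eps)*eps^4*L/(4*(1+eps)*(1+ln c)) \<le> (1-eps)*(\<rho>*mu/k)*hfun(c/\<rho> - 1)"
          using G by (simp_all add: mu_def c_def L_def k_def R_def \<rho>_def)
        have ecD: "(\<rho> - 1)^2 * mu > (1 - eps/2) * k * E"
          using DEC by (simp add: EC_def mu_def k_def E_def R_def \<Lambda>_def \<rho>_def)
        have Leq: "L = a - ln k" unfolding L_def a_def using npos k1 by (simp add: ln_div)
        have lnRk: "ln (R/k) = s - ln k" unfolding s_def using R2 k1 by (simp add: ln_div)
        show ?thesis
        proof (cases "k < R / (real n / R) powr \<gamma> n")
          case True
          have "k * pbar (p n) D / (R * pC) \<le> \<delta>"
            using elim(3) C DC True by (simp add: k_def R_def pC_def)
          then have ii: "k * pbar (p n) D \<le> \<delta> * R * pC" using R2 pCpos by (simp add: divide_le_eq mult.commute mult.left_commute)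
          have mD: "mu = pbar (p n) D * (k*(k-1)/2)"
            using E0e_pbar[of D "p n"] G by (simp add: mu_def k_def choose2_real)
          have "(\<rho>-1)^2*mu \<le> (1-eps/2)*k*E"
            by (rule small_abs[OF k1 kR R2 pCpos ii mD mC cC \<rho>\<xi> \<rho>1 \<beta>_def EbL eps \<delta>(1)]) (use \<Lambda>1 in simp)
          then show ?thesis using ecD by simp
        next
          case False
          have "R / (real n / R) powr \<gamma> n \<le> k" using False by simp
          then have "R / k \<le> (real n / R) powr \<gamma> n" using k1 npos R2 by (simp add: divide_le_eq mult.commute)
          moreover have pp: "(real n / R) powr \<gamma> n > 0" using npos R2 by simp
          moreover have "R/k > 0" using k1 R2 by simp
          ultimately have "ln (R/k) \<le> ln ((real n / R) powr \<gamma> n)" by (simp del: ln_powr)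
          also have "\<dots> = \<gamma> n * \<Lambda>" by (simp add: \<Lambda>_def)
          also have "\<dots> \<le> \<gamma>0 * \<Lambda>" using elim(2) \<Lambda>1 by simp
          finally have lRk: "ln (R/k) \<le> \<gamma>0 * \<Lambda>" .
          have lRk0: "ln (R/k) \<ge> 0" using kR k1 by simp
          have \<gamma>08: "\<gamma>0 \<le> 1/8" and \<gamma>0\<kappa>: "\<gamma>0 \<le> \<kappa>/6" by (simp_all add: \<gamma>0_def)
          have LL: "L \<ge> \<Lambda>" using Leq lnRk lRk0 \<Lambda>eq by linarith
          have "\<gamma>0 * \<Lambda> \<le> \<Lambda>/8" using \<gamma>08 \<Lambda>1 by simp
          then have EL: "E \<ge> L/2" using lnnk Leq lnRk lRk ln\<Lambda> LL \<Lambda>eq unfolding E_def by linarith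
          have r1: "(\<rho>-1)^2 \<le> 1"
          proof -
            have "\<rho> - 1 \<le> 1" using \<rho>\<xi> \<xi> by simp
            then show ?thesis using \<rho>1 by (simp add: power_le_one)
          qed
          have "(\<rho>-1)^2 * mu \<le> mu" using r1 mu by (simp add: mult_left_le_one_le)
          then have mub: "mu > (1-eps/2)*(k*L/2)"
          proof -
            have "(1 - eps/2) * (k * E) \<ge> (1-eps/2)*(k*(L/2))" using EL eps k1 by (intro mult_left_mono) auto
            then have "(1 - eps/2) * k * E \<ge> (1-eps/2)*(k*(L/2))" by (simp add: mult.assoc)
            then show ?thesis using ecD \<open>(\<rho>-1)^2 * mu \<le> mu\<close> by simp
          qed
          have Lpos: "L > 0" using LL \<Lambda>1 by simp
          have kL: "k*L > 0" using Lpos k1 by simp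
          have hc0: "hfun (c-1) \<ge> 0" using h_nonneg[of "c-1"] c1 by simp
          have hc2: "hfun (c-1) \<le> 2"
          proof -
            have ee: "(1+eps)*(1-eps/2) \<ge> 1" using eps by (simp add: algebra_simps)
            have "k*L = (1+eps)*mu*hfun(c-1)" using ceq by simp
            also have "\<dots> \<ge> (1+eps)*((1-eps/2)*(k*L/2))*hfun(c-1)"
              using mub eps hc0 by (intro mult_right_mono mult_left_mono) auto
            finally have "(1+eps)*(1-eps/2)*((k*L/2)*hfun(c-1)) \<le> k*L" by (simp add: mult_ac)
            moreover have "(k*L/2)*hfun(c-1) \<le> (1+eps)*(1-eps/2)*((k*L/2)*hfun(c-1))"
              using mult_right_mono[OF ee, of "(k*L/2)*hfun(c-1)"] kL hc0 by simp
            ultimately have "(k*L/2)*hfun(c-1) \<le> k*L" by linarith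
            then have "(k*L)*hfun(c-1) \<le> (k*L)*2" by simp
            then show ?thesis using kL by (simp only: mult_le_cancel_left_pos)
          qed
          have cexp: "c \<le> exp 2"
          proof (rule ccontr)
            assume "\<not> c \<le> exp 2"
            then have "hfun (c-1) > c" using h_big by simp
            then show False using hc2 exp2_gt2 \<open>\<not> c \<le> exp 2\<close> by linarith
          qed
          have lnc: "ln c \<le> 2" using cexp c1 by (metis ln_exp ln_le_cancel_iff exp_gt_zero less_le_trans zero_less_one)
          have lnc0: "ln c \<ge> 0" using c1 by simp
          have "\<kappa>*L/3 \<le> \<kappa>*L/(1+ln c)"
            using lnc lnc0 \<kappa> Lpos by (intro divide_left_mono) auto
          also have "\<kappa>*L/(1+ln c) = (1-eps)*eps^4*L/(4*(1+eps)*(1+ln c))"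
            by (simp add: \<kappa>_def)
          also note keyi
          finally have T1: "\<kappa>*L/3 \<le> (1-eps)*(\<rho>*mu/k)*hfun(c/\<rho> - 1)" .
          have "\<kappa>*\<Lambda>/3 \<le> \<kappa>*L/3" using LL \<kappa> by simp
          moreover have "\<gamma>0 * \<Lambda> \<le> \<kappa>/6 * \<Lambda>" using \<gamma>0\<kappa> \<Lambda>1 by simp
          ultimately have "M \<le> (1-eps)*(\<rho>*mu/k)*hfun(c/\<rho> - 1) - ln (R/k)"
            using T1 lRk \<kappa>\<Lambda> by linarith
          then show ?thesis by (simp add: \<rho>_def mu_def k_def c_def R_def)
        qed
      qed
    qed
  qed
qed



lemma case12:
  fixes p :: "nat \<Rightarrow> nat \<Rightarrow> nat \<Rightarrow> real"
    and r :: "nat \<Rightarrow> nat"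
    and rho :: "nat \<Rightarrow> nat set \<Rightarrow> real"
    and eps M :: real and f :: "nat \<Rightarrow> real"
  assumes eps: "0 < eps" "eps < 1"
    and rho_gt1: "\<And>n C. C \<subseteq> {1..n} \<Longrightarrow> card C = r n \<Longrightarrow> rho n C > 1"
    and A2: "\<And>\<eta>. \<eta> > 0 \<Longrightarrow> eventually (\<lambda>n. \<forall>C i j. C \<subseteq> {1..n} \<and> card C = r n \<and> i \<in> C \<and> j \<in> C \<and> i \<noteq> j
                  \<longrightarrow> (rho n C)^2 * p n i j \<le> \<eta>) sequentially"
    and cond: "eventually (\<lambda>n. \<forall>C D. C \<subseteq> {1..n} \<and> card C = r n \<and> D \<subseteq> C \<and> D \<noteq> {} \<longrightarrow>
                  E0e (p n) D * hfun (rho n C - 1) / (real (card D) * ln (real n / real (card D))) \<le> 1 - eps)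
               sequentially"
    and f: "f \<longlonglongrightarrow> 0" and evf: "eventually (\<lambda>n. real (r n) = real n powr f n) sequentially"
    and iv: "\<forall>\<eta>>0. eventually (\<lambda>n. \<forall>C. C \<subseteq> {1..n} \<and> card C = r n \<longrightarrow>
                        pbar (p n) C > 0 \<and>
                        ln (1 / pbar (p n) C) \<le> \<eta> * (ln (real n / real (r n)) / ln (real (r n)))) sequentially"
  shows "eventually (\<lambda>n. \<forall>C D. C \<subseteq> {1..n} \<and> card C = r n \<and> D \<in> EC eps (p n) n (r n) (rho n C) C \<longrightarrow>
            M \<le> (1 - eps) * (rho n C * E0e (p n) D / real (card D)) * hfun (cD eps (p n) n D / rho n C - 1)
                 - ln (real (r n) / real (card D))) sequentially"
proof -
  define \<kappa> where "\<kappa> = (1-eps)*eps^4/(4*(1+eps))"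
  define \<tau> where "\<tau> = min (1/8) (\<kappa>/24)"
  define \<eta>' where "\<eta>' = \<kappa>/(2*(2 + \<bar>M\<bar>/ln 2))"
  have \<kappa>: "\<kappa> > 0" using eps by (simp add: \<kappa>_def)
  have \<tau>: "\<tau> > 0" "\<tau> \<le> 1/8" "\<tau> \<le> \<kappa>/24" using \<kappa> by (auto simp: \<tau>_def)
  have ln2: "ln (2::real) > 0" by simp
  have \<eta>': "\<eta>' > 0" using \<kappa> ln2 by (simp add: \<eta>'_def add_pos_nonneg)
  have \<kappa>\<eta>: "\<kappa>/(2*\<eta>') = 2 + \<bar>M\<bar>/ln 2"
  proof -
    have "2 + \<bar>M\<bar>/ln 2 > 0" using ln2 by (simp add: add_pos_nonneg)
    then show ?thesis using \<kappa> by (simp add: \<eta>'_def)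
  qed
  obtain X0 :: real where X0: "\<And>x::real. x \<ge> X0 \<Longrightarrow> (1/4)*x - 0 - ln x \<ge> 0"
    using ev_lin_ln[of "1/4" 0] by (auto simp: eventually_at_top_linorder)
  define A0 where "A0 = max (max 2 X0) (48*M/(5*\<kappa>))"
  have e2: "eventually (\<lambda>n. f n < \<tau>) sequentially" using f \<tau>(1) by (rule order_tendstoD)
  have e3: "eventually (\<lambda>n. \<forall>C i j. C \<subseteq> {1..n} \<and> card C = r n \<and> i \<in> C \<and> j \<in> C \<and> i \<noteq> j
                  \<longrightarrow> (rho n C)^2 * p n i j \<le> 1) sequentially" using A2[of 1] by simp
  have e4: "eventually (\<lambda>n. \<forall>C. C \<subseteq> {1..n} \<and> card C = r n \<longrightarrow>
                        pbar (p n) C > 0 \<and>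
                        ln (1 / pbar (p n) C) \<le> \<eta>' * (ln (real n / real (r n)) / ln (real (r n)))) sequentially"
    using iv \<eta>' by blast
  have e6: "eventually (\<lambda>n. ln (real n) \<ge> A0) sequentially"
    by (rule ev_ln_seq) (rule eventually_ge_at_top)
  show ?thesis using evf e2 e3 e4 cond e6
  proof eventually_elim
    case (elim n)
    show ?case
    proof (intro allI impI)
      fix C D assume CD: "C \<subseteq> {1..n} \<and> card C = r n \<and> D \<in> EC eps (p n) n (r n) (rho n C) C"
      show "M \<le> (1 - eps) * (rho n C * E0e (p n) D / real (card D)) * hfun (cD eps (p n) n D / rho n C - 1)
                 - ln (real (r n) / real (card D))"
      proof -
        from CD have C: "C \<subseteq> {1..n}" "card C = r n" and DEC: "D \<in> EC eps (p n) n (r n) (rho n C) C" by auto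
        have finC: "finite C" using C(1) finite_subset by blast
        from elim(4) C have pC: "pbar (p n) C > 0"
          and inv: "ln (1/pbar (p n) C) \<le> \<eta>' * (ln (real n / real (r n)) / ln (real (r n)))" by auto
        have r2: "r n \<ge> 2"
        proof (rule ccontr)
          assume "\<not> r n \<ge> 2"
          then have "card C choose 2 = 0" using C by (simp add: binomial_eq_0)
          then have "pbar (p n) C = 0" by (simp add: pbar_def)
          with pC show False by simp
        qed
        have "r n \<le> n" using card_mono[OF _ C(1)] C by simp
        define R where "R = real (r n)"
        define a where "a = ln (real n)"
        define s where "s = ln R"
        define \<Lambda> where "\<Lambda> = ln (real n / R)"
        have R2: "R \<ge> 2" using r2 by (simp add: R_def)
        have npos: "real n > 0" using \<open>r n \<le> n\<close> r2 by simp
        have \<Lambda>eq: "\<Lambda> = a - s" unfolding \<Lambda>_def a_def s_def using R2 npos by (simp add: ln_div)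
        have s0: "s \<ge> ln 2" using R2 by (simp add: s_def)
        have sfa: "s = f n * a" using elim(1) npos by (simp add: s_def R_def a_def)
        have aA: "a \<ge> A0" using elim(6) by (simp add: a_def)
        have a2: "a \<ge> 2" and aX: "a \<ge> X0" and aM: "a \<ge> 48*M/(5*\<kappa>)" using aA by (auto simp: A0_def)
        have sle: "s \<le> \<tau> * a" using mult_right_mono[of "f n" \<tau> a] sfa elim(2) a2 by simp
        have \<tau>a: "\<tau> * a \<le> (1/8) * a" using mult_right_mono[of \<tau> "1/8" a] \<tau>(2) a2 by simp
        have \<tau>a2: "\<tau> * a \<le> (\<kappa>/24) * a" using mult_right_mono[of \<tau> "\<kappa>/24" a] \<tau>(3) a2 by simp
        have \<Lambda>lo: "\<Lambda> \<ge> (7/8)*a" using \<Lambda>eq sle \<tau>a by linarith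
        have \<Lambda>1: "\<Lambda> \<ge> 1" using \<Lambda>lo a2 by simp
        have \<Lambda>a: "\<Lambda> \<le> a" using \<Lambda>eq s0 ln2 by linarith
        have lna: "ln a \<le> a/4" using X0[OF aX] by simp
        have "ln \<Lambda> \<le> ln a" using \<Lambda>a \<Lambda>1 by simp
        then have ln\<Lambda>: "ln \<Lambda> \<le> a/4" using lna by linarith
        have s8: "4* s \<le> a/2" using sle \<tau>a by linarith
        have Ms: "\<kappa>*\<Lambda>/6 - s \<ge> M"
        proof -
          have "\<kappa>*((7/8)*a)/6 \<le> \<kappa>*\<Lambda>/6" using \<Lambda>lo \<kappa> by simp
          moreover have "s \<le> (\<kappa>/24)*a" using sle \<tau>a2 by linarith
          moreover have "M \<le> 5*\<kappa>*a/48" using aM \<kappa> by (simp add: divide_le_eq mult.commute)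
          ultimately show ?thesis by (simp add: field_simps)
        qed
        have rn: "r n < n"
        proof -
          have q: "real n / R > 0" using npos R2 by simp
          have "real n / R > 1"
          proof (rule ccontr)
            assume "\<not> real n / R > 1"
            then have "ln (real n / R) \<le> 0" using q by simp
            with \<Lambda>1 show False by (simp add: \<Lambda>_def)
          qed
          then show ?thesis using R2 by (simp add: R_def field_simps)
        qed
        define \<rho> where "\<rho> = rho n C"
        have \<rho>1: "\<rho> > 1" using rho_gt1 C by (simp add: \<rho>_def)
        define pC where "pC = pbar (p n) C"
        have pCpos: "pC > 0" using pC by (simp add: pC_def)
        have cr2: "real (card C choose 2) > 0" using C r2 by simp
        have "E0e (p n) C \<le> (1/\<rho>^2) * real (card C choose 2)"
        proof (rule E0e_le[OF finC])
          show "0 \<le> 1/\<rho>^2" by simp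
          fix i j assume ij: "i \<in> C" "j \<in> C" "i < j"
          then have "\<rho>^2 * p n i j \<le> 1" using elim(3) C by (simp add: \<rho>_def)
          then show "p n i j \<le> 1/\<rho>^2" using \<rho>1 by (simp add: field_simps)
        qed
        then have "pC \<le> 1/\<rho>^2" using cr2 by (simp add: pC_def pbar_def divide_le_eq)
        then have "\<rho>^2 \<le> 1/pC" using pCpos \<rho>1 by (simp add: field_simps)
        then have "ln (\<rho>^2) \<le> ln (1/pC)" by (rule ln_mono) (use \<rho>1 in simp)
        moreover have "ln (\<rho>^2) = 2 * ln \<rho>" using \<rho>1 by (simp add: ln_realpow)
        ultimately have lnrho: "2 * ln \<rho> \<le> \<eta>' * (\<Lambda>/s)"
          using inv by (simp add: pC_def \<Lambda>_def s_def R_def)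
        define X where "X = \<eta>' * (\<Lambda>/s)"
        have spos: "s > 0" using s0 ln2 by linarith
        have X0': "X \<ge> 0" unfolding X_def using \<eta>' \<Lambda>1 spos by (intro mult_nonneg_nonneg divide_nonneg_pos) auto
        have DC: "D \<subseteq> C" using DEC by (simp add: EC_def)
        have finD: "finite D" using DC finC finite_subset by blast
        define k where "k = real (card D)"
        have Dne: "D \<noteq> {}"
        proof
          assume "D = {}"
          then show False using DEC by (simp add: EC_def E0e_def)
        qed
        have k1: "k \<ge> 1" using Dne finD by (simp add: k_def Suc_le_eq card_gt_0_iff)
        have kR: "k \<le> R" using card_mono[OF finC DC] C by (simp add: k_def R_def)
        define E where "E = ln (real n * k / R^2) - ln \<Lambda>"
        have lnnk: "ln (real n * k / R^2) = a + ln k - 2 * s"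
          unfolding a_def s_def using ln3[of "real n" k R] npos k1 R2 by simp
        define L where "L = ln (real n / k)"
        have Leq: "L = a - ln k" unfolding L_def a_def using npos k1 by (simp add: ln_div)
        have lnk0: "ln k \<ge> 0" using k1 by simp
        have lnks: "ln k \<le> s" using kR k1 by (simp add: s_def)
        have LL: "L \<ge> \<Lambda>" using Leq lnks \<Lambda>eq by linarith
        have EL: "E \<ge> L/2" using lnnk Leq lnk0 s8 ln\<Lambda> unfolding E_def by linarith
        have Epos: "E > 0" using EL LL \<Lambda>1 by linarith
        have G: "2 \<le> card D \<and> card D \<le> r n \<and> E0e (p n) D > 0 \<and> cD eps (p n) n D \<ge> 1
           \<and> (1+eps)*E0e (p n) D*hfun(cD eps (p n) n D - 1) = real(card D)*ln(real n/real(card D))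
           \<and> (1-eps)*eps^4*ln(real n/real(card D))/(4*(1+eps)*(1+ln(cD eps (p n) n D)))
              \<le> (1-eps)*(rho n C*E0e (p n) D/real(card D))*hfun(cD eps (p n) n D/rho n C - 1)"
        proof (rule gen[OF eps C DEC rn])
          show "ln(real n * real(card D)/(real (r n))^2) - ln(ln(real n/real (r n))) > 0"
            using Epos by (simp add: E_def k_def R_def \<Lambda>_def)
          show "rho n C > 1" using \<rho>1 by (simp add: \<rho>_def)
          show "E0e (p n) D * hfun(rho n C - 1)/(real(card D) * ln(real n/real(card D))) \<le> 1 - eps"
            using elim(5) C DC Dne by blast
        qed
        define mu where "mu = E0e (p n) D"
        define c where "c = cD eps (p n) n D"
        have mu: "mu > 0" and c1: "c \<ge> 1"
          and ceq: "(1+eps)*mu*hfun(c - 1) = k*L"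
          and keyi: "(1-eps)*eps^4*L/(4*(1+eps)*(1+ln c)) \<le> (1-eps)*(\<rho>*mu/k)*hfun(c/\<rho> - 1)"
          using G by (simp_all add: mu_def c_def L_def k_def R_def \<rho>_def)
        have ecD: "(\<rho> - 1)^2 * mu > (1 - eps/2) * k * E"
          using DEC by (simp add: EC_def mu_def k_def E_def R_def \<Lambda>_def \<rho>_def)
        have Lpos: "L > 0" using LL \<Lambda>1 by simp
        have kL: "k*L > 0" using Lpos k1 by simp
        have hc0: "hfun (c-1) \<ge> 0" using h_nonneg[of "c-1"] c1 by simp
        have mub: "mu*\<rho>^2 > (1-eps/2)*(k*L/2)"
        proof -
          have "(\<rho>-1)^2 \<le> \<rho>^2" using \<rho>1 by (intro power_mono) auto
          then have "(\<rho>-1)^2 * mu \<le> \<rho>^2 * mu" using mu by (intro mult_right_mono) auto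
          moreover have "(1 - eps/2) * (k * E) \<ge> (1-eps/2)*(k*(L/2))" using EL eps k1 by (intro mult_left_mono) auto
          ultimately show ?thesis using ecD by (simp add: mult.assoc mult.commute)
        qed
        have hc2: "hfun (c-1) \<le> 2*\<rho>^2"
        proof -
          have ee: "(1+eps)*(1-eps/2) \<ge> 1" using eps by (simp add: algebra_simps)
          have "\<rho>^2*(k*L) = \<rho>^2*((1+eps)*mu*hfun(c-1))" using ceq by simp
          also have "\<dots> = (1+eps)*(mu*\<rho>^2)*hfun(c-1)" by (simp add: algebra_simps)
          finally have "\<rho>^2*(k*L) = (1+eps)*(mu*\<rho>^2)*hfun(c-1)" .
          also have "\<dots> \<ge> (1+eps)*((1-eps/2)*(k*L/2))*hfun(c-1)"
            using mub eps hc0 by (intro mult_right_mono mult_left_mono) auto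
          finally have "(1+eps)*(1-eps/2)*((k*L/2)*hfun(c-1)) \<le> \<rho>^2*(k*L)" by (simp add: mult_ac)
          moreover have "(k*L/2)*hfun(c-1) \<le> (1+eps)*(1-eps/2)*((k*L/2)*hfun(c-1))"
            using mult_right_mono[OF ee, of "(k*L/2)*hfun(c-1)"] kL hc0 by simp
          ultimately have "(k*L/2)*hfun(c-1) \<le> \<rho>^2*(k*L)" by linarith
          moreover have "(k*L)*hfun(c-1) = 2*((k*L/2)*hfun(c-1))" by simp
          moreover have "(k*L)*(2*\<rho>^2) = 2*(\<rho>^2*(k*L))" by simp
          ultimately have "(k*L)*hfun(c-1) \<le> (k*L)*(2*\<rho>^2)" by linarith
          then show ?thesis using kL by (simp only: mult_le_cancel_left_pos)
        qed
        have lnr0: "ln \<rho> \<ge> 0" using \<rho>1 by simp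
        have lnc: "ln c \<le> 2 + 2 * ln \<rho>"
        proof (cases "c \<le> exp 2")
          case True
          then have "ln c \<le> 2" using c1 by (metis ln_exp ln_le_cancel_iff exp_gt_zero less_le_trans zero_less_one)
          then show ?thesis using lnr0 by simp
        next
          case False
          then have "hfun (c-1) > c" using h_big by simp
          then have "c \<le> 2*\<rho>^2" using hc2 by simp
          then have "ln c \<le> ln (2*\<rho>^2)" by (rule ln_mono) (use c1 in simp)
          also have "\<dots> = ln 2 + 2 * ln \<rho>" using \<rho>1 by (simp add: ln_mult ln_realpow)
          also have "ln (2::real) \<le> 1" using ln_le_minus_one[of 2] by simp
          finally show ?thesis by simp
        qed
        have lnc0: "ln c \<ge> 0" using c1 by simp
        have den: "1 + ln c \<le> 3 + X" using lnc lnrho unfolding X_def by linarith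
        have "\<kappa>*\<Lambda>/(3+X) \<le> \<kappa>*L/(1+ln c)"
        proof -
          have "\<kappa>*\<Lambda>/(3+X) \<le> \<kappa>*\<Lambda>/(1+ln c)" using den lnc0 \<kappa> \<Lambda>1 by (intro divide_left_mono) auto
          also have "\<dots> \<le> \<kappa>*L/(1+ln c)" using LL \<kappa> lnc0 by (intro divide_right_mono) auto
          finally show ?thesis .
        qed
        also have "\<kappa>*L/(1+ln c) = (1-eps)*eps^4*L/(4*(1+eps)*(1+ln c))"
          by (simp add: \<kappa>_def)
        also note keyi
        finally have T1: "\<kappa>*\<Lambda>/(3+X) \<le> (1-eps)*(\<rho>*mu/k)*hfun(c/\<rho> - 1)" .
        have lnRk: "ln (R/k) \<le> s" using lnk0 R2 k1 by (simp add: s_def ln_div)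
        have "M \<le> \<kappa>*\<Lambda>/(3+X) - s"
        proof (cases "X \<le> 3")
          case True
          have "\<kappa>*\<Lambda>/6 \<le> \<kappa>*\<Lambda>/(3+X)" using True X0' \<kappa> \<Lambda>1 by (intro divide_left_mono) auto
          then show ?thesis using Ms by linarith
        next
          case False
          have "\<kappa>*\<Lambda>/(2*X) \<le> \<kappa>*\<Lambda>/(3+X)" using False \<kappa> \<Lambda>1 by (intro divide_left_mono) auto
          moreover have "\<kappa>*\<Lambda>/(2*X) = s * (\<kappa>/(2*\<eta>'))"
            unfolding X_def using \<eta>' spos \<Lambda>1 by (simp add: field_simps)
          moreover have "s * (\<kappa>/(2*\<eta>')) - s = s * (1 + \<bar>M\<bar>/ln 2)" unfolding \<kappa>\<eta> by (simp add: algebra_simps)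
          moreover have "s * (1 + \<bar>M\<bar>/ln 2) \<ge> ln 2 * (1 + \<bar>M\<bar>/ln 2)"
            using s0 ln2 by (intro mult_right_mono) (auto simp: add_nonneg_nonneg)
          moreover have "ln 2 * (1 + \<bar>M\<bar>/ln 2) = ln 2 + \<bar>M\<bar>" using ln2 by (simp add: field_simps)
          ultimately show ?thesis using ln2 by linarith
        qed
        then have "M \<le> (1-eps)*(\<rho>*mu/k)*hfun(c/\<rho> - 1) - ln (R/k)" using T1 lnRk by linarith
        then show ?thesis by (simp add: \<rho>_def mu_def k_def c_def R_def)
      qed
    qed
  qed
qed


theorem lemma4:
  fixes p :: "nat \<Rightarrow> nat \<Rightarrow> nat \<Rightarrow> real"
    and r :: "nat \<Rightarrow> nat"
    and rho :: "nat \<Rightarrow> nat set \<Rightarrow> real"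
    and eps :: real
  assumes eps: "0 < eps" "eps < 1"
    and p_sym: "\<And>n i j. i \<in> {1..n} \<Longrightarrow> j \<in> {1..n} \<Longrightarrow> i \<noteq> j \<Longrightarrow> p n i j = p n j i"
    and p_range: "\<And>n i j. i \<in> {1..n} \<Longrightarrow> j \<in> {1..n} \<Longrightarrow> i \<noteq> j \<Longrightarrow> 0 \<le> p n i j \<and> p n i j \<le> 1"
    and rho_gt1: "\<And>n C. C \<subseteq> {1..n} \<Longrightarrow> card C = r n \<Longrightarrow> rho n C > 1"
    and rho_p_le1: "\<And>n C i j. C \<subseteq> {1..n} \<Longrightarrow> card C = r n \<Longrightarrow> i \<in> C \<Longrightarrow> j \<in> C \<Longrightarrow> i \<noteq> j
                      \<Longrightarrow> rho n C * p n i j \<le> 1"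
    \<comment> \<open>Assumption 2\<close>
    and A2: "\<And>\<eta>. \<eta> > 0 \<Longrightarrow> eventually (\<lambda>n. \<forall>C i j. C \<subseteq> {1..n} \<and> card C = r n \<and> i \<in> C \<and> j \<in> C \<and> i \<noteq> j
                  \<longrightarrow> (rho n C)^2 * p n i j \<le> \<eta>) sequentially"
    \<comment> \<open>Assumption 1.1 or Assumption 1.2\<close>
    and A1: "(\<exists>\<delta>::real. 0 < \<delta> \<and> \<delta> < 1/2
               \<and> (\<lambda>n. real (r n)) \<in> O(\<lambda>n. real n powr (1/2 - \<delta>))
               \<and> (\<exists>\<gamma>::nat \<Rightarrow> real. (\<forall>n. 0 < \<gamma> n) \<and> \<gamma> \<longlonglongrightarrow> 0 \<and>
                    eventually (\<lambda>n. \<forall>C D. C \<subseteq> {1..n} \<and> card C = r n \<and> D \<subseteq> C \<and>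
                        real (card D) < real (r n) / (real n / real (r n)) powr \<gamma> n
                      \<longrightarrow> real (card D) * pbar (p n) D / (real (card C) * pbar (p n) C) \<le> \<delta>) sequentially)
               \<and> (\<forall>\<eta>>0. eventually (\<lambda>n. \<forall>C. C \<subseteq> {1..n} \<and> card C = r n \<longrightarrow>
                        pbar (p n) C > 0 \<and>
                        1 / pbar (p n) C \<le> \<eta> * (real (r n) / ln (real n / real (r n)))) sequentially))
           \<or> ((\<exists>f::nat \<Rightarrow> real. f \<longlonglongrightarrow> 0 \<and> eventually (\<lambda>n. real (r n) = real n powr f n) sequentially)
               \<and> (\<forall>\<eta>>0. eventually (\<lambda>n. \<forall>C. C \<subseteq> {1..n} \<and> card C = r n \<longrightarrow>
                        pbar (p n) C > 0 \<and>
                        ln (1 / pbar (p n) C) \<le> \<eta> * (ln (real n / real (r n)) / ln (real (r n)))) sequentially))"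
    \<comment> \<open>the additional condition\<close>
    and cond: "eventually (\<lambda>n. \<forall>C D. C \<subseteq> {1..n} \<and> card C = r n \<and> D \<subseteq> C \<and> D \<noteq> {} \<longrightarrow>
                  E0e (p n) D * hfun (rho n C - 1) / (real (card D) * ln (real n / real (card D))) \<le> 1 - eps)
               sequentially"
  shows "\<forall>M::real. eventually (\<lambda>n. \<forall>C D. C \<subseteq> {1..n} \<and> card C = r n \<and> D \<in> EC eps (p n) n (r n) (rho n C) C \<longrightarrow>
            M \<le> (1 - eps) * (rho n C * E0e (p n) D / real (card D)) * hfun (cD eps (p n) n D / rho n C - 1)
                 - ln (real (r n) / real (card D))) sequentially"
  proof (intro allI)
  fix M :: real
  show "eventually (\<lambda>n. \<forall>C D. C \<subseteq> {1..n} \<and> card C = r n \<and> D \<in> EC eps (p n) n (r n) (rho n C) C \<longrightarrow>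
            M \<le> (1 - eps) * (rho n C * E0e (p n) D / real (card D)) * hfun (cD eps (p n) n D / rho n C - 1)
                 - ln (real (r n) / real (card D))) sequentially"
    using A1
  proof
    assume H: "\<exists>\<delta>::real. 0 < \<delta> \<and> \<delta> < 1/2
               \<and> (\<lambda>n. real (r n)) \<in> O(\<lambda>n. real n powr (1/2 - \<delta>))
               \<and> (\<exists>\<gamma>::nat \<Rightarrow> real. (\<forall>n. 0 < \<gamma> n) \<and> \<gamma> \<longlonglongrightarrow> 0 \<and>
                    eventually (\<lambda>n. \<forall>C D. C \<subseteq> {1..n} \<and> card C = r n \<and> D \<subseteq> C \<and>
                        real (card D) < real (r n) / (real n / real (r n)) powr \<gamma> n
                      \<longrightarrow> real (card D) * pbar (p n) D / (real (card C) * pbar (p n) C) \<le> \<delta>) sequentially)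
               \<and> (\<forall>\<eta>>0. eventually (\<lambda>n. \<forall>C. C \<subseteq> {1..n} \<and> card C = r n \<longrightarrow>
                        pbar (p n) C > 0 \<and>
                        1 / pbar (p n) C \<le> \<eta> * (real (r n) / ln (real n / real (r n)))) sequentially)"
    then obtain \<delta> :: real where d: "0 < \<delta>" "\<delta> < 1/2"
      and bo: "(\<lambda>n. real (r n)) \<in> O(\<lambda>n. real n powr (1/2 - \<delta>))"
      and g: "\<exists>\<gamma>::nat \<Rightarrow> real. (\<forall>n. 0 < \<gamma> n) \<and> \<gamma> \<longlonglongrightarrow> 0 \<and>
                    eventually (\<lambda>n. \<forall>C D. C \<subseteq> {1..n} \<and> card C = r n \<and> D \<subseteq> C \<and>
                        real (card D) < real (r n) / (real n / real (r n)) powr \<gamma> n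
                      \<longrightarrow> real (card D) * pbar (p n) D / (real (card C) * pbar (p n) C) \<le> \<delta>) sequentially"
      and iii: "\<forall>\<eta>>0. eventually (\<lambda>n. \<forall>C. C \<subseteq> {1..n} \<and> card C = r n \<longrightarrow>
                        pbar (p n) C > 0 \<and>
                        1 / pbar (p n) C \<le> \<eta> * (real (r n) / ln (real n / real (r n)))) sequentially"
      by blast
    from g obtain \<gamma> :: "nat \<Rightarrow> real" where g2: "\<gamma> \<longlonglongrightarrow> 0"
      and ii: "eventually (\<lambda>n. \<forall>C D. C \<subseteq> {1..n} \<and> card C = r n \<and> D \<subseteq> C \<and>
                        real (card D) < real (r n) / (real n / real (r n)) powr \<gamma> n
                      \<longrightarrow> real (card D) * pbar (p n) D / (real (card C) * pbar (p n) C) \<le> \<delta>) sequentially"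
      by blast
    obtain K where K: "K > 0"
      and evK0: "eventually (\<lambda>n. norm (real (r n)) \<le> K * norm (real n powr (1/2 - \<delta>))) sequentially"
      using bo by (elim landau_o.bigE)
    have evK: "eventually (\<lambda>n. real (r n) \<le> K * real n powr (1/2 - \<delta>)) sequentially"
      using evK0 by eventually_elim simp
    show ?thesis by (rule case11[OF eps rho_gt1 cond d K evK g2 ii iii])
  next
    assume H: "(\<exists>f::nat \<Rightarrow> real. f \<longlonglongrightarrow> 0 \<and> eventually (\<lambda>n. real (r n) = real n powr f n) sequentially)
               \<and> (\<forall>\<eta>>0. eventually (\<lambda>n. \<forall>C. C \<subseteq> {1..n} \<and> card C = r n \<longrightarrow>
                        pbar (p n) C > 0 \<and>
                        ln (1 / pbar (p n) C) \<le> \<eta> * (ln (real n / real (r n)) / ln (real (r n)))) sequentially)"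
    then obtain f :: "nat \<Rightarrow> real" where f: "f \<longlonglongrightarrow> 0" and evf: "eventually (\<lambda>n. real (r n) = real n powr f n) sequentially"
      by blast
    show ?thesis by (rule case12[OF eps rho_gt1 A2 cond f evf conjunct2[OF H]])
  qed
qed

end
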